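(* Let $a$ and $b$ be disjoint finite groups of labeled samples with $n_1^a,n_0^a,n_1^b,n_0^b\ge 1$, and let the within-group orderings $\mathrm{p}^a$ and $\mathrm{p}^b$ be fixed. Then: (i) there exists a cross-group ordering $o$ with $$\Delta\mathrm{xAUC}(o)\le \min\Big(\max\big(\tfrac{1}{n_1^b},\tfrac{1}{n_0^b}\big),\ \max\big(\tfrac{1}{n_1^a},\tfrac{1}{n_0^a}\big)\Big);$$ (ii) there exists a cross-group ordering $o'$ with $$\Delta\mathrm{PRF}(o')\le \min\Big(\max\big(\tfrac{n_0^b}{n_1^a n_0},\tfrac{1}{n_0}\big),\ \max\big(\tfrac{n_0^a}{n_1^b n_0},\tfrac{1}{n_0}\big)\Big).$$
   Context: Setting: two disjoint finite groups $a$, $b$ of samples; each sample $u$ has a label $Y_u\in\{0,1\}$. Let $n^a,n^b$ be the group sizes, $n_1^a,n_0^a$ the numbers of label-1 and label-0 samples in $a$ (similarly $n_1^b,n_0^b$), $n_1=n_1^a+n_1^b$, $n_0=n_0^a+n_0^b$. Fixed within-group rankings are given: $\mathrm{p}^a=(\mathrm{p}^{a(1)},\dots,\mathrm{p}^{a(n^a)})$ lists all samples of $a$, and $\mathrm{p}^b=(\mathrm{p}^{b(1)},\dots,\mathrm{p}^{b(n^b)})$ lists all samples of $b$. A cross-group ordering $o$ is a ranked list (strict total order, top to bottom) of all samples of $a\cup b$ whose restriction to $a$ is $\mathrm{p}^a$ and whose restriction to $b$ is $\mathrm{p}^b$. Write $u\succ_o v$ if $u$ is ranked above $v$ in $o$.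 Define $\mathrm{xAUC}_o(a,b)=\frac{1}{n_1^a n_0^b}\#\{(u,v):u\in a,Y_u=1,v\in b,Y_v=0,u\succ_o v\}$, and $\mathrm{xAUC}_o(b,a)$ symmetrically (positives of $b$ over negatives of $a$, normalized by $n_1^b n_0^a$); $\Delta\mathrm{xAUC}(o)=|\mathrm{xAUC}_o(a,b)-\mathrm{xAUC}_o(b,a)|$. $\mathrm{PRF}_o(a)=\frac{1}{n_1^a n_0}\#\{(u,v):u\in a,Y_u=1,Y_v=0\ (v\in a\cup b),u\succ_o v\}$, $\mathrm{PRF}_o(b)$ symmetrically (normalized by $n_1^b n_0$), and $\Delta\mathrm{PRF}(o)=|\mathrm{PRF}_o(a)-\mathrm{PRF}_o(b)|$. *)

theory Defs
  imports Complex_Main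
begin

(* A ranked list (top to bottom) is a distinct list; u is ranked above v. *)
definition ranked_above :: "'a list \<Rightarrow> 'a \<Rightarrow> 'a \<Rightarrow> bool" where
  "ranked_above ord u v \<longleftrightarrow> (\<exists>i j. i < j \<and> j < length ord \<and> ord ! i = u \<and> ord ! j = v)"

definition cross_ordering :: "'a set \<Rightarrow> 'a set \<Rightarrow> 'a list \<Rightarrow> 'a list \<Rightarrow> 'a list \<Rightarrow> bool" where
  "cross_ordering A B pa pb ord \<longleftrightarrow>
     distinct ord \<and> set ord = A \<union> B \<and> filter (\<lambda>x. x \<in> A) ord = pa \<and> filter (\<lambda>x. x \<in> B) ord = pb"

(* labels: Y u = True means label 1, Y u = False means label 0 *)
definition n1 :: "('a \<Rightarrow> bool) \<Rightarrow> 'a set \<Rightarrow> nat" where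
  "n1 Y A = card {u \<in> A. Y u}"

definition n0 :: "('a \<Rightarrow> bool) \<Rightarrow> 'a set \<Rightarrow> nat" where
  "n0 Y A = card {u \<in> A. \<not> Y u}"

definition xAUC :: "('a \<Rightarrow> bool) \<Rightarrow> 'a list \<Rightarrow> 'a set \<Rightarrow> 'a set \<Rightarrow> real" where
  "xAUC Y ord A B =
     real (card {(u, v). u \<in> A \<and> Y u \<and> v \<in> B \<and> \<not> Y v \<and> ranked_above ord u v})
     / (real (n1 Y A) * real (n0 Y B))"

definition delta_xAUC :: "('a \<Rightarrow> bool) \<Rightarrow> 'a list \<Rightarrow> 'a set \<Rightarrow> 'a set \<Rightarrow> real" where
  "delta_xAUC Y ord A B = \<bar>xAUC Y ord A B - xAUC Y ord B A\<bar>"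

definition PRF :: "('a \<Rightarrow> bool) \<Rightarrow> 'a list \<Rightarrow> 'a set \<Rightarrow> 'a set \<Rightarrow> real" where
  "PRF Y ord A B =
     real (card {(u, v). u \<in> A \<and> Y u \<and> v \<in> A \<union> B \<and> \<not> Y v \<and> ranked_above ord u v})
     / (real (n1 Y A) * real (n0 Y A + n0 Y B))"

definition delta_PRF :: "('a \<Rightarrow> bool) \<Rightarrow> 'a list \<Rightarrow> 'a set \<Rightarrow> 'a set \<Rightarrow> real" where
  "delta_PRF Y ord A B = \<bar>PRF Y ord A B - PRF Y ord B A\<bar>"

end

theory Submission imports Defs begin

lemma rk_set: "ranked_above L u v \<Longrightarrow> u \<in> set L \<and> v \<in> set L"
  unfolding ranked_above_def by auto

lemma rk_append: "ranked_above (xs @ ys) u v \<longleftrightarrow>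
   ranked_above xs u v \<or> ranked_above ys u v \<or> (u \<in> set xs \<and> v \<in> set ys)"
proof
  assume "ranked_above (xs @ ys) u v"
  then obtain i j where ij: "i < j" "j < length (xs@ys)" "(xs@ys) ! i = u" "(xs@ys) ! j = v"
    unfolding ranked_above_def by blast
  show "ranked_above xs u v \<or> ranked_above ys u v \<or> (u \<in> set xs \<and> v \<in> set ys)"
  proof (cases "j < length xs")
    case True
    then have "i < length xs" using ij(1) by simp
    then have "xs ! i = u" "xs ! j = v" using ij(3,4) True by (simp_all add: nth_append)
    then have "ranked_above xs u v" using ij(1) True unfolding ranked_above_def by blast
    then show ?thesis by simp
  next
    case False
    note F = False
    show ?thesis
    proof (cases "i < length xs")
      case True
      then have "xs ! i = u" using ij(3) by (simp add: nth_append)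
      then have "u \<in> set xs" using True nth_mem by blast
      moreover have "ys ! (j - length xs) = v" using ij(4) F by (simp add: nth_append)
      moreover have "j - length xs < length ys" using ij(2) F by simp
      ultimately show ?thesis using nth_mem by blast
    next
      case False
      have "ys ! (i - length xs) = u" "ys ! (j - length xs) = v" using ij(3,4) F False by (simp_all add: nth_append)
      moreover have "i - length xs < j - length xs" "j - length xs < length ys" using ij(1,2) F False by simp_all
      ultimately have "ranked_above ys u v" unfolding ranked_above_def by blast
      then show ?thesis by simp
    qed
  qed
next
  assume "ranked_above xs u v \<or> ranked_above ys u v \<or> (u \<in> set xs \<and> v \<in> set ys)"
  then show "ranked_above (xs @ ys) u v"
  proof (elim disjE)
    assume "ranked_above xs u v"
    then obtain i j where "i < j" "j < length xs" "xs ! i = u" "xs ! j = v"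
      unfolding ranked_above_def by blast
    moreover have "(xs @ ys) ! i = xs ! i" "(xs @ ys) ! j = xs ! j" using calculation(1,2) by (simp_all add: nth_append)
    ultimately show ?thesis unfolding ranked_above_def
      by (intro exI[of _ i] exI[of _ j]) simp
  next
    assume "ranked_above ys u v"
    then obtain i j where "i < j" "j < length ys" "ys ! i = u" "ys ! j = v"
      unfolding ranked_above_def by blast
    then show ?thesis unfolding ranked_above_def
      by (intro exI[of _ "length xs + i"] exI[of _ "length xs + j"]) (simp add: nth_append)
  next
    assume "u \<in> set xs \<and> v \<in> set ys"
    then obtain i j where "i < length xs" "xs ! i = u" "j < length ys" "ys ! j = v"
      by (auto simp: in_set_conv_nth)
    then show ?thesis unfolding ranked_above_def
      by (intro exI[of _ i] exI[of _ "length xs + j"]) (simp add: nth_append)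
  qed
qed

lemma rk_single: "\<not> ranked_above [x] u v"
  unfolding ranked_above_def by auto

lemma rk_Cons: "ranked_above (x # ys) u v \<longleftrightarrow> (u = x \<and> v \<in> set ys) \<or> ranked_above ys u v"
  using rk_append[of "[x]" ys u v] rk_single[of x u v] by auto

lemma rk_Nil: "\<not> ranked_above [] u v"
  unfolding ranked_above_def by auto

lemma rk_swap:
  assumes "x \<notin> A" "set T \<inter> A = {}" "set R \<inter> A = {}" "x \<notin> set T" "x \<notin> set R" "set pa = A"
  shows "ranked_above (T @ x # pa @ R) u v \<longleftrightarrow>
    (ranked_above (T @ pa @ x # R) u v \<and> \<not>(u \<in> A \<and> v = x)) \<or> (u = x \<and> v \<in> A)"
proof -
  have 1: "ranked_above T u v \<Longrightarrow> u \<in> set T \<and> v \<in> set T" by (rule rk_set)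
  have 2: "ranked_above pa u v \<Longrightarrow> u \<in> A \<and> v \<in> A" using rk_set[of pa u v] assms(6) by simp
  have 3: "ranked_above R u v \<Longrightarrow> u \<in> set R \<and> v \<in> set R" by (rule rk_set)
  show ?thesis
    unfolding rk_append rk_Cons set_append set_simps assms(6)
    using 1 2 3 assms(1-5) by blast
qed

lemma step_rel:
  assumes "A \<inter> B = {}" "set pa = A" "distinct pb" "set pb = B" "k < length pb"
  shows "ranked_above (take (Suc k) pb @ pa @ drop (Suc k) pb) u v \<longleftrightarrow>
    (ranked_above (take k pb @ pa @ drop k pb) u v \<and> \<not>(u \<in> A \<and> v = pb!k)) \<or> (u = pb!k \<and> v \<in> A)"
proof -
  define T where "T = take k pb"
  define R where "R = drop (Suc k) pb"
  define x where "x = pb ! k"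
  have pb: "pb = T @ x # R" unfolding T_def R_def x_def using assms(5) by (simp add: id_take_nth_drop)
  have d: "drop k pb = x # R" unfolding R_def x_def using assms(5) by (simp add: Cons_nth_drop_Suc)
  have t: "take (Suc k) pb = T @ [x]" unfolding T_def x_def using assms(5) by (simp add: take_Suc_conv_app_nth)
  have "x \<notin> set T" "x \<notin> set R" using assms(3) pb by auto
  moreover have "set T \<inter> A = {}" "set R \<inter> A = {}" "x \<notin> A" using assms(1,4) pb by auto
  moreover have "take (Suc k) pb @ pa @ drop (Suc k) pb = T @ x # pa @ R" using t R_def by simp
  moreover have "take k pb @ pa @ drop k pb = T @ pa @ x # R" using d T_def by simp
  ultimately show ?thesis using rk_swap[of x A T R pa u v] assms(2)
    by (simp add: x_def[symmetric])
qed

lemma divt: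
  fixes f :: "nat \<Rightarrow> real"
  assumes "f 0 \<ge> 0" "f N \<le> 0" "\<forall>k<N. \<bar>f k - f (Suc k)\<bar> \<le> d" "d \<ge> 0"
  shows "\<exists>k\<le>N. \<bar>f k\<bar> \<le> d"
  using assms(2,3)
proof (induction N)
  case 0 then show ?case using assms(1,4) by auto
next
  case (Suc N)
  show ?case
  proof (cases "f N \<le> 0")
    case True then show ?thesis using Suc by (metis le_SucI less_SucI)
  next
    case False
    have "\<bar>f N - f (Suc N)\<bar> \<le> d" using Suc by auto
    then have "\<bar>f (Suc N)\<bar> \<le> d" using False Suc.prems(1) by auto
    then show ?thesis by blast
  qed
qed


lemma cross_O:
  assumes "A \<inter> B = {}" "distinct pa" "set pa = A" "distinct pb" "set pb = B"
  shows "cross_ordering A B pa pb (take k pb @ pa @ drop k pb)"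
proof -
  have "distinct (take k pb @ drop k pb)" using assms(4) by simp
  then have d: "distinct (take k pb @ pa @ drop k pb)"
    using assms(1-5) set_take_subset[of k pb] set_drop_subset[of k pb] distinct_take distinct_drop
    by (auto simp del: append_take_drop_id)
  have s: "set (take k pb @ pa @ drop k pb) = A \<union> B"
  proof -
    have "set pb = set (take k pb) \<union> set (drop k pb)" by (metis append_take_drop_id set_append)
    then show ?thesis using assms(3,5) by auto
  qed
  have fa: "filter (\<lambda>x. x \<in> A) (take k pb) = []" "filter (\<lambda>x. x \<in> A) (drop k pb) = []"
    using assms(1,5) set_take_subset[of k pb] set_drop_subset[of k pb]
    by (auto simp: filter_empty_conv)
  have fb: "filter (\<lambda>x. x \<in> B) pa = []" using assms(1,3) by (auto simp: filter_empty_conv)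
  have "filter (\<lambda>x. x \<in> A) pa = pa" using assms(3) by (simp add: filter_id_conv)
  moreover have "filter (\<lambda>x. x \<in> B) (take k pb) @ filter (\<lambda>x. x \<in> B) (drop k pb) = pb"
    using assms(5) by (metis append_take_drop_id filter_append filter_id_conv)
  ultimately show ?thesis unfolding cross_ordering_def using d s fa fb by simp
qed

lemma card_extra: "finite S2 \<Longrightarrow> finite E \<Longrightarrow> S1 \<subseteq> S2 \<union> E \<Longrightarrow> card S1 \<le> card S2 + card E"
  by (meson card_Un_le card_mono finite_UnI le_trans)


lemma xauc_half:
  assumes fA: "finite A" and fB: "finite B" and dj: "A \<inter> B = {}"
    and dpa: "distinct pa" and spa: "set pa = A" and dpb: "distinct pb" and spb: "set pb = B"
    and h1: "n1 Y A \<ge> 1" "n0 Y A \<ge> 1" "n1 Y B \<ge> 1" "n0 Y B \<ge> 1"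
  shows "\<exists>ord. cross_ordering A B pa pb ord \<and>
           delta_xAUC Y ord A B \<le> max (1 / real (n1 Y B)) (1 / real (n0 Y B))"
proof -
  define Ok where "Ok k = take k pb @ pa @ drop k pb" for k
  define c1 where "c1 k = card {(u, v). u \<in> A \<and> Y u \<and> v \<in> B \<and> \<not> Y v \<and> ranked_above (Ok k) u v}" for k
  define c2 where "c2 k = card {(u, v). u \<in> B \<and> Y u \<and> v \<in> A \<and> \<not> Y v \<and> ranked_above (Ok k) u v}" for k
  define D where "D k = xAUC Y (Ok k) A B - xAUC Y (Ok k) B A" for k
  define d where "d = max (1 / real (n1 Y B)) (1 / real (n0 Y B))"
  define N where "N = length pb"
  have Dk: "D k = real (c1 k) / (real (n1 Y A) * real (n0 Y B)) - real (c2 k) / (real (n1 Y B) * real (n0 Y A))" for k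
    unfolding D_def xAUC_def c1_def c2_def by simp
  have fin1: "finite {(u, v). u \<in> A \<and> Y u \<and> v \<in> B \<and> \<not> Y v \<and> P u v}" for P
    by (rule finite_subset[of _ "A \<times> B"]) (use fA fB in auto)
  have fin2: "finite {(u, v). u \<in> B \<and> Y u \<and> v \<in> A \<and> \<not> Y v \<and> P u v}" for P
    by (rule finite_subset[of _ "B \<times> A"]) (use fA fB in auto)
  have pos: "real (n1 Y A) > 0" "real (n0 Y A) > 0" "real (n1 Y B) > 0" "real (n0 Y B) > 0"
    using h1 by auto
  have step: "\<bar>D k - D (Suc k)\<bar> \<le> d" if k: "k < N" for k
  proof -
    define x where "x = pb ! k"
    have xB: "x \<in> B" using k spb unfolding x_def N_def by auto
    have rel: "ranked_above (Ok (Suc k)) u v \<longleftrightarrow>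
      (ranked_above (Ok k) u v \<and> \<not>(u \<in> A \<and> v = x)) \<or> (u = x \<and> v \<in> A)" for u v
      unfolding Ok_def x_def using step_rel[OF dj spa dpb spb] k N_def by blast
    show ?thesis
    proof (cases "Y x")
      case True
      have e1: "c1 (Suc k) = c1 k" unfolding c1_def using rel True xB dj
        by (intro arg_cong[where f=card]) auto
      have s1: "{(u, v). u \<in> B \<and> Y u \<and> v \<in> A \<and> \<not> Y v \<and> ranked_above (Ok k) u v}
          \<subseteq> {(u, v). u \<in> B \<and> Y u \<and> v \<in> A \<and> \<not> Y v \<and> ranked_above (Ok (Suc k)) u v}"
        using rel dj by auto
      have s2: "{(u, v). u \<in> B \<and> Y u \<and> v \<in> A \<and> \<not> Y v \<and> ranked_above (Ok (Suc k)) u v}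
          \<subseteq> {(u, v). u \<in> B \<and> Y u \<and> v \<in> A \<and> \<not> Y v \<and> ranked_above (Ok k) u v} \<union> ({x} \<times> {v \<in> A. \<not> Y v})"
        using rel dj by auto
      have "card ({x} \<times> {v \<in> A. \<not> Y v}) = n0 Y A" unfolding n0_def by (simp add: card_cartesian_product)
      then have c2a: "c2 (Suc k) \<le> c2 k + n0 Y A" unfolding c2_def
        using card_extra[OF fin2 _ s2] fA by auto
      have c2b: "c2 k \<le> c2 (Suc k)" unfolding c2_def using card_mono[OF fin2 s1] .
      have "D k - D (Suc k) = (real (c2 (Suc k)) - real (c2 k)) / (real (n1 Y B) * real (n0 Y A))"
        unfolding Dk e1 by (simp add: diff_divide_distrib)
      moreover have "(real (c2 (Suc k)) - real (c2 k)) \<le> real (n0 Y A)" using c2a by simp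
      moreover have "0 \<le> (real (c2 (Suc k)) - real (c2 k))" using c2b by simp
      ultimately have "0 \<le> D k - D (Suc k)" "D k - D (Suc k) \<le> real (n0 Y A) / (real (n1 Y B) * real (n0 Y A))"
        using pos by (simp, metis divide_right_mono mult_nonneg_nonneg of_nat_0_le_iff)
      moreover have "real (n0 Y A) / (real (n1 Y B) * real (n0 Y A)) = 1 / real (n1 Y B)" using pos by simp
      ultimately show ?thesis unfolding d_def by auto
    next
      case False
      have e2: "c2 (Suc k) = c2 k" unfolding c2_def using rel False xB dj
        by (intro arg_cong[where f=card]) auto
      have s1: "{(u, v). u \<in> A \<and> Y u \<and> v \<in> B \<and> \<not> Y v \<and> ranked_above (Ok (Suc k)) u v}
          \<subseteq> {(u, v). u \<in> A \<and> Y u \<and> v \<in> B \<and> \<not> Y v \<and> ranked_above (Ok k) u v}"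
        using rel dj xB by auto
      have s2: "{(u, v). u \<in> A \<and> Y u \<and> v \<in> B \<and> \<not> Y v \<and> ranked_above (Ok k) u v}
          \<subseteq> {(u, v). u \<in> A \<and> Y u \<and> v \<in> B \<and> \<not> Y v \<and> ranked_above (Ok (Suc k)) u v} \<union> ({u \<in> A. Y u} \<times> {x})"
        using rel dj by auto
      have "card ({u \<in> A. Y u} \<times> {x}) = n1 Y A" unfolding n1_def by (simp add: card_cartesian_product)
      then have c1a: "c1 k \<le> c1 (Suc k) + n1 Y A" unfolding c1_def
        using card_extra[OF fin1 _ s2] fA by auto
      have c1b: "c1 (Suc k) \<le> c1 k" unfolding c1_def using card_mono[OF fin1 s1] .
      have "D k - D (Suc k) = (real (c1 k) - real (c1 (Suc k))) / (real (n1 Y A) * real (n0 Y B))"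
        unfolding Dk e2 by (simp add: diff_divide_distrib)
      moreover have "(real (c1 k) - real (c1 (Suc k))) \<le> real (n1 Y A)" using c1a by simp
      moreover have "0 \<le> (real (c1 k) - real (c1 (Suc k)))" using c1b by simp
      ultimately have "0 \<le> D k - D (Suc k)" "D k - D (Suc k) \<le> real (n1 Y A) / (real (n1 Y A) * real (n0 Y B))"
        using pos by (simp, metis divide_right_mono mult_nonneg_nonneg of_nat_0_le_iff)
      moreover have "real (n1 Y A) / (real (n1 Y A) * real (n0 Y B)) = 1 / real (n0 Y B)" using pos by simp
      ultimately show ?thesis unfolding d_def by auto
    qed
  qed
  have Ok0: "Ok 0 = pa @ pb" unfolding Ok_def by simp
  have OkN: "Ok N = pb @ pa" unfolding Ok_def N_def by simp
  have "c2 0 = 0" unfolding c2_def Ok0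
  proof -
    have "{(u, v). u \<in> B \<and> Y u \<and> v \<in> A \<and> \<not> Y v \<and> ranked_above (pa @ pb) u v} = {}"
      using dj spa spb by (auto simp: rk_append dest: rk_set)
    then show "card {(u, v). u \<in> B \<and> Y u \<and> v \<in> A \<and> \<not> Y v \<and> ranked_above (pa @ pb) u v} = 0" by (simp only: card.empty)
  qed
  then have D0: "D 0 \<ge> 0" unfolding Dk using pos by simp
  have "c1 N = 0" unfolding c1_def OkN
  proof -
    have "{(u, v). u \<in> A \<and> Y u \<and> v \<in> B \<and> \<not> Y v \<and> ranked_above (pb @ pa) u v} = {}"
      using dj spa spb by (auto simp: rk_append dest: rk_set)
    then show "card {(u, v). u \<in> A \<and> Y u \<and> v \<in> B \<and> \<not> Y v \<and> ranked_above (pb @ pa) u v} = 0" by (simp only: card.empty)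
  qed
  then have DN: "D N \<le> 0" unfolding Dk using pos by simp
  have "d \<ge> 0" unfolding d_def by (simp add: le_max_iff_disj)
  then obtain k where "k \<le> N" "\<bar>D k\<bar> \<le> d" using divt[of D N d] D0 DN step by blast
  moreover have "delta_xAUC Y (Ok k) A B = \<bar>D k\<bar>" unfolding delta_xAUC_def D_def by simp
  ultimately show ?thesis using cross_O[OF dj dpa spa dpb spb, of k] unfolding Ok_def d_def by metis
qed


lemma endpt:
  fixes a b n1 n2 m t :: real
  assumes "a \<ge> n1 * m" "b \<le> n2 * m" "n1 > 0" "n2 > 0" "t > 0"
  shows "0 \<le> a / (n1 * t) - b / (n2 * t)"
proof -
  have "b / (n2 * t) \<le> (n2 * m) / (n2 * t)" using assms by (intro divide_right_mono) auto
  also have "\<dots> = m / t" using assms by simp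
  also have "\<dots> = (n1 * m) / (n1 * t)" using assms by simp
  also have "\<dots> \<le> a / (n1 * t)" using assms by (intro divide_right_mono) auto
  finally show ?thesis by simp
qed

lemma stepbound:
  fixes a c n t :: real
  assumes "0 \<le> a" "a \<le> c" "n > 0" "t > 0"
  shows "0 \<le> a / (n * t)" "a / (n * t) \<le> c / (n * t)"
  using assms by (auto intro!: divide_right_mono)

lemma prf_half:
  assumes fA: "finite A" and fB: "finite B" and dj: "A \<inter> B = {}"
    and dpa: "distinct pa" and spa: "set pa = A" and dpb: "distinct pb" and spb: "set pb = B"
    and h1: "n1 Y A \<ge> 1" "n0 Y A \<ge> 1" "n1 Y B \<ge> 1" "n0 Y B \<ge> 1"
  shows "\<exists>ord. cross_ordering A B pa pb ord \<and>
           delta_PRF Y ord A B \<le> max (real (n0 Y A) / (real (n1 Y B) * real (n0 Y A + n0 Y B)))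
                       (1 / real (n0 Y A + n0 Y B))"
proof -
  define Ok where "Ok k = take k pb @ pa @ drop k pb" for k
  define c1 where "c1 k = card {(u, v). u \<in> A \<and> Y u \<and> v \<in> A \<union> B \<and> \<not> Y v \<and> ranked_above (Ok k) u v}" for k
  define c2 where "c2 k = card {(u, v). u \<in> B \<and> Y u \<and> v \<in> A \<union> B \<and> \<not> Y v \<and> ranked_above (Ok k) u v}" for k
  define D where "D k = PRF Y (Ok k) A B - PRF Y (Ok k) B A" for k
  define t where "t = real (n0 Y A + n0 Y B)"
  define d where "d = max (real (n0 Y A) / (real (n1 Y B) * t)) (1 / t)"
  define N where "N = length pb"
  have Dk: "D k = real (c1 k) / (real (n1 Y A) * t) - real (c2 k) / (real (n1 Y B) * t)" for k
    unfolding D_def PRF_def c1_def c2_def t_def by (simp add: Un_commute add.commute)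
  have fin1: "finite {(u, v). u \<in> A \<and> Y u \<and> v \<in> A \<union> B \<and> \<not> Y v \<and> P u v}" for P
    by (rule finite_subset[of _ "A \<times> (A \<union> B)"]) (use fA fB in auto)
  have fin2: "finite {(u, v). u \<in> B \<and> Y u \<and> v \<in> A \<union> B \<and> \<not> Y v \<and> P u v}" for P
    by (rule finite_subset[of _ "B \<times> (A \<union> B)"]) (use fA fB in auto)
  have pos: "real (n1 Y A) > 0" "real (n0 Y A) > 0" "real (n1 Y B) > 0" "real (n0 Y B) > 0" "t > 0"
    using h1 unfolding t_def by auto
  have step: "\<bar>D k - D (Suc k)\<bar> \<le> d" if k: "k < N" for k
  proof -
    define x where "x = pb ! k"
    have xB: "x \<in> B" using k spb unfolding x_def N_def by auto
    have rel: "ranked_above (Ok (Suc k)) u v \<longleftrightarrow>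
      (ranked_above (Ok k) u v \<and> \<not>(u \<in> A \<and> v = x)) \<or> (u = x \<and> v \<in> A)" for u v
      unfolding Ok_def x_def using step_rel[OF dj spa dpb spb] k N_def by blast
    show ?thesis
    proof (cases "Y x")
      case True
      have e1: "c1 (Suc k) = c1 k" unfolding c1_def using rel True xB dj
        by (intro arg_cong[where f=card]) auto
      have s1: "{(u, v). u \<in> B \<and> Y u \<and> v \<in> A \<union> B \<and> \<not> Y v \<and> ranked_above (Ok k) u v}
          \<subseteq> {(u, v). u \<in> B \<and> Y u \<and> v \<in> A \<union> B \<and> \<not> Y v \<and> ranked_above (Ok (Suc k)) u v}"
        using rel dj by auto
      have s2: "{(u, v). u \<in> B \<and> Y u \<and> v \<in> A \<union> B \<and> \<not> Y v \<and> ranked_above (Ok (Suc k)) u v}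
          \<subseteq> {(u, v). u \<in> B \<and> Y u \<and> v \<in> A \<union> B \<and> \<not> Y v \<and> ranked_above (Ok k) u v} \<union> ({x} \<times> {v \<in> A. \<not> Y v})"
        using rel dj by auto
      have "card ({x} \<times> {v \<in> A. \<not> Y v}) = n0 Y A" unfolding n0_def by (simp add: card_cartesian_product)
      then have c2a: "c2 (Suc k) \<le> c2 k + n0 Y A" unfolding c2_def
        using card_extra[OF fin2 _ s2] fA by auto
      have c2b: "c2 k \<le> c2 (Suc k)" unfolding c2_def using card_mono[OF fin2 s1] .
      have "D k - D (Suc k) = (real (c2 (Suc k)) - real (c2 k)) / (real (n1 Y B) * t)"
        unfolding Dk e1 by (simp add: diff_divide_distrib)
      moreover have "(real (c2 (Suc k)) - real (c2 k)) \<le> real (n0 Y A)" using c2a by simp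
      moreover have "0 \<le> (real (c2 (Suc k)) - real (c2 k))" using c2b by simp
      ultimately have "0 \<le> D k - D (Suc k)" "D k - D (Suc k) \<le> real (n0 Y A) / (real (n1 Y B) * t)"
        using stepbound[of "real (c2 (Suc k)) - real (c2 k)" "real (n0 Y A)" "real (n1 Y B)" t] pos by simp_all
      then show ?thesis unfolding d_def by auto
    next
      case False
      have e2: "c2 (Suc k) = c2 k" unfolding c2_def using rel False xB dj
        by (intro arg_cong[where f=card]) auto
      have s1: "{(u, v). u \<in> A \<and> Y u \<and> v \<in> A \<union> B \<and> \<not> Y v \<and> ranked_above (Ok (Suc k)) u v}
          \<subseteq> {(u, v). u \<in> A \<and> Y u \<and> v \<in> A \<union> B \<and> \<not> Y v \<and> ranked_above (Ok k) u v}"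
        using rel dj xB by auto
      have s2: "{(u, v). u \<in> A \<and> Y u \<and> v \<in> A \<union> B \<and> \<not> Y v \<and> ranked_above (Ok k) u v}
          \<subseteq> {(u, v). u \<in> A \<and> Y u \<and> v \<in> A \<union> B \<and> \<not> Y v \<and> ranked_above (Ok (Suc k)) u v} \<union> ({u \<in> A. Y u} \<times> {x})"
        using rel dj by auto
      have "card ({u \<in> A. Y u} \<times> {x}) = n1 Y A" unfolding n1_def by (simp add: card_cartesian_product)
      then have c1a: "c1 k \<le> c1 (Suc k) + n1 Y A" unfolding c1_def
        using card_extra[OF fin1 _ s2] fA by auto
      have c1b: "c1 (Suc k) \<le> c1 k" unfolding c1_def using card_mono[OF fin1 s1] .
      have "D k - D (Suc k) = (real (c1 k) - real (c1 (Suc k))) / (real (n1 Y A) * t)"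
        unfolding Dk e2 by (simp add: diff_divide_distrib)
      moreover have "(real (c1 k) - real (c1 (Suc k))) \<le> real (n1 Y A)" using c1a by simp
      moreover have "0 \<le> (real (c1 k) - real (c1 (Suc k)))" using c1b by simp
      ultimately have "0 \<le> D k - D (Suc k)" "D k - D (Suc k) \<le> real (n1 Y A) / (real (n1 Y A) * t)"
        using stepbound[of "real (c1 k) - real (c1 (Suc k))" "real (n1 Y A)" "real (n1 Y A)" t] pos by simp_all
      moreover have "real (n1 Y A) / (real (n1 Y A) * t) = 1 / t" using pos by simp
      ultimately show ?thesis unfolding d_def by auto
    qed
  qed
  have Ok0: "Ok 0 = pa @ pb" unfolding Ok_def by simp
  have OkN: "Ok N = pb @ pa" unfolding Ok_def N_def by simp
  have cA1: "card ({u \<in> A. Y u} \<times> {v \<in> B. \<not> Y v}) = n1 Y A * n0 Y B"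
    unfolding n1_def n0_def by (simp add: card_cartesian_product)
  have cA2: "card ({u \<in> B. Y u} \<times> {v \<in> B. \<not> Y v}) = n1 Y B * n0 Y B"
    unfolding n1_def n0_def by (simp add: card_cartesian_product)
  have cA3: "card ({u \<in> A. Y u} \<times> {v \<in> A. \<not> Y v}) = n1 Y A * n0 Y A"
    unfolding n1_def n0_def by (simp add: card_cartesian_product)
  have cA4: "card ({u \<in> B. Y u} \<times> {v \<in> A. \<not> Y v}) = n1 Y B * n0 Y A"
    unfolding n1_def n0_def by (simp add: card_cartesian_product)
  have "{u \<in> A. Y u} \<times> {v \<in> B. \<not> Y v} \<subseteq> {(u, v). u \<in> A \<and> Y u \<and> v \<in> A \<union> B \<and> \<not> Y v \<and> ranked_above (Ok 0) u v}"
    unfolding Ok0 using spa spb by (auto simp: rk_append)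
  note sub = this
  have a0: "n1 Y A * n0 Y B \<le> c1 0" unfolding c1_def using card_mono[OF fin1 sub] cA1 by simp
  have "{(u, v). u \<in> B \<and> Y u \<and> v \<in> A \<union> B \<and> \<not> Y v \<and> ranked_above (Ok 0) u v} \<subseteq> {u \<in> B. Y u} \<times> {v \<in> B. \<not> Y v}"
    unfolding Ok0 using spa spb dj by (auto simp: rk_append dest: rk_set)
  then have b0: "c2 0 \<le> n1 Y B * n0 Y B" unfolding c2_def using card_mono[of "{u \<in> B. Y u} \<times> {v \<in> B. \<not> Y v}"] cA2 fB
    by simp
  have D0: "D 0 \<ge> 0" unfolding Dk
    by (rule endpt[where m="real (n0 Y B)"]) (use a0 b0 pos in \<open>simp_all flip: of_nat_mult\<close>)
  have "{u \<in> B. Y u} \<times> {v \<in> A. \<not> Y v} \<subseteq> {(u, v). u \<in> B \<and> Y u \<and> v \<in> A \<union> B \<and> \<not> Y v \<and> ranked_above (Ok N) u v}"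
    unfolding OkN using spa spb by (auto simp: rk_append)
  note sub = this
  have aN: "n1 Y B * n0 Y A \<le> c2 N" unfolding c2_def using card_mono[OF fin2 sub] cA4 by simp
  have "{(u, v). u \<in> A \<and> Y u \<and> v \<in> A \<union> B \<and> \<not> Y v \<and> ranked_above (Ok N) u v} \<subseteq> {u \<in> A. Y u} \<times> {v \<in> A. \<not> Y v}"
    unfolding OkN using spa spb dj by (auto simp: rk_append dest: rk_set)
  then have bN: "c1 N \<le> n1 Y A * n0 Y A" unfolding c1_def using card_mono[of "{u \<in> A. Y u} \<times> {v \<in> A. \<not> Y v}"] cA3 fA
    by simp
  have "0 \<le> real (c2 N) / (real (n1 Y B) * t) - real (c1 N) / (real (n1 Y A) * t)"
    by (rule endpt[where m="real (n0 Y A)"]) (use aN bN pos in \<open>simp_all flip: of_nat_mult\<close>)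
  then have DN: "D N \<le> 0" unfolding Dk by simp
  have "d \<ge> 0" unfolding d_def using pos by (simp add: le_max_iff_disj)
  then obtain k where "k \<le> N" "\<bar>D k\<bar> \<le> d" using divt[of D N d] D0 DN step by blast
  moreover have "delta_PRF Y (Ok k) A B = \<bar>D k\<bar>" unfolding delta_PRF_def D_def by simp
  ultimately show ?thesis using cross_O[OF dj dpa spa dpb spb, of k] unfolding Ok_def d_def t_def by metis
qed

lemma cross_sym: "cross_ordering B A pb pa ord \<Longrightarrow> cross_ordering A B pa pb ord"
  unfolding cross_ordering_def by (auto simp: Un_commute)

lemma dx_sym: "delta_xAUC Y ord B A = delta_xAUC Y ord A B"
  unfolding delta_xAUC_def by (simp add: abs_minus_commute)

lemma dp_sym: "delta_PRF Y ord B A = delta_PRF Y ord A B"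
  unfolding delta_PRF_def by (simp add: abs_minus_commute)

lemma pick:
  fixes a b :: real
  assumes "P x" "f x \<le> a" "P y" "f y \<le> b"
  shows "\<exists>z. P z \<and> f z \<le> min a b"
proof (cases "a \<le> b")
  case True then show ?thesis using assms by (intro exI[of _ x]) auto
next
  case False then show ?thesis using assms by (intro exI[of _ y]) auto
qed

theorem proposition1:
  fixes A B :: "'a set" and Y :: "'a \<Rightarrow> bool" and pa pb :: "'a list"
  assumes "finite A" and "finite B" and "A \<inter> B = {}"
    and "distinct pa" and "set pa = A" and "distinct pb" and "set pb = B"
    and "n1 Y A \<ge> 1" and "n0 Y A \<ge> 1" and "n1 Y B \<ge> 1" and "n0 Y B \<ge> 1"
  shows "(\<exists>ord. cross_ordering A B pa pb ord \<and>
            delta_xAUC Y ord A B \<le>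
              min (max (1 / real (n1 Y B)) (1 / real (n0 Y B)))
                  (max (1 / real (n1 Y A)) (1 / real (n0 Y A))))
       \<and> (\<exists>ord'. cross_ordering A B pa pb ord' \<and>
            delta_PRF Y ord' A B \<le>
              min (max (real (n0 Y B) / (real (n1 Y A) * real (n0 Y A + n0 Y B)))
                       (1 / real (n0 Y A + n0 Y B)))
                  (max (real (n0 Y A) / (real (n1 Y B) * real (n0 Y A + n0 Y B)))
                       (1 / real (n0 Y A + n0 Y B))))"
proof -
  have dj': "B \<inter> A = {}" using assms(3) by blast
  obtain o1 where o1: "cross_ordering A B pa pb o1"
    "delta_xAUC Y o1 A B \<le> max (1 / real (n1 Y B)) (1 / real (n0 Y B))"
    using xauc_half[OF assms] by blast
  obtain o2 where o2: "cross_ordering B A pb pa o2"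
    "delta_xAUC Y o2 B A \<le> max (1 / real (n1 Y A)) (1 / real (n0 Y A))"
    using xauc_half[OF assms(2,1) dj' assms(6,7,4,5,10,11,8,9)] by blast
  obtain p1 where p1: "cross_ordering A B pa pb p1"
    "delta_PRF Y p1 A B \<le> max (real (n0 Y A) / (real (n1 Y B) * real (n0 Y A + n0 Y B)))
                       (1 / real (n0 Y A + n0 Y B))"
    using prf_half[OF assms] by blast
  obtain p2 where p2: "cross_ordering B A pb pa p2"
    "delta_PRF Y p2 B A \<le> max (real (n0 Y B) / (real (n1 Y A) * real (n0 Y B + n0 Y A)))
                       (1 / real (n0 Y B + n0 Y A))"
    using prf_half[OF assms(2,1) dj' assms(6,7,4,5,10,11,8,9)] by blast
  have X: "\<exists>ord. cross_ordering A B pa pb ord \<and>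
            delta_xAUC Y ord A B \<le>
              min (max (1 / real (n1 Y B)) (1 / real (n0 Y B)))
                  (max (1 / real (n1 Y A)) (1 / real (n0 Y A)))"
    by (rule pick[of "cross_ordering A B pa pb" o1 "\<lambda>w. delta_xAUC Y w A B" _ o2, OF o1(1,2)]) (use cross_sym[OF o2(1)] o2(2) dx_sym[of Y o2 B A] in simp_all)
  have P: "\<exists>ord'. cross_ordering A B pa pb ord' \<and>
            delta_PRF Y ord' A B \<le>
              min (max (real (n0 Y B) / (real (n1 Y A) * real (n0 Y A + n0 Y B)))
                       (1 / real (n0 Y A + n0 Y B)))
                  (max (real (n0 Y A) / (real (n1 Y B) * real (n0 Y A + n0 Y B)))
                       (1 / real (n0 Y A + n0 Y B)))"
    by (rule pick[of "cross_ordering A B pa pb" p2 "\<lambda>w. delta_PRF Y w A B" _ p1, OF _ _ p1(1,2)])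
       (use cross_sym[OF p2(1)] p2(2) dp_sym[of Y p2 B A] in \<open>simp_all add: add.commute\<close>)
  show ?thesis using X P by blast
qed

end
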